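(* Let $U:\mathbb R^m_{++}\to\mathbb R$ be a concave NDAS function and let $s^{opt}$ be a maximizer of $U$ over $B_s$. For $i=0,\dots,k$ let $w^i\in W$ have weighted center $(x^i,y^i,s^i)$, let $g^i$ be a supergradient of $U$ at $s^i$, set $g^{iw}=(Y^i)^{-1}g^i$ and $W^i:=\{w:(g^{iw})^\top(w-w^i)\ge0\}\cap W$. Assume $w^i\in\mathrm{relint}\bigl(\bigcap_{j=0}^{i-1}W^j\bigr)$ for $i=1,\dots,k$. Then $$\Bigl(\bigcap_{j=0}^k W^j\Bigr)\cap W_{s^{opt}}\neq\emptyset.$$
   Context: Let $A\in\mathbb R^{m\times n}$ have full column rank $n\le m$ and $b\in\mathbb R^m$ be such that $\{x:Ax\le b\}$ is bounded with nonempty interior. For $w\in\mathbb R^m_{++}$ the weighted center of $w$ is the unique $(x,y,s)$ with $Ax+s=b$, $s>0$, $A^\top y=0$, $\mathrm{Diag}(s)y=w$ ($s$-vector $s$, $y$-vector $y$). Capital letters denote diagonal matrices of vectors. $W=\{w\in\mathbb R^m:w>0,\ e^\top w=1\}$. Centric $s$-vectors are $s$-vectors of weighted centers of elements of $W$; $B_s$ is their set; for centric $s$, $W_s=\{w\in W:$ the $s$-vector of $w$ is $s\}$. Supergradient of concave $U$ at $s^0$: $g$ with $U(s)\le U(s^0)+g^\top(s-s^0)$ for all $s$. A function $f:\mathbb R^m_{++}\to\mathbb R$ is NDAS if for every $d\in\mathbb R^m_{++}$, with $D=\mathrm{Diag}(d)$: (1) $f(s)\le\max\{f(Ds),f(D^{-1}s)\}$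 for all $s\in\mathbb R^m_{++}$; (2) if $f(s^0)\le f(Ds^0)$ for a single $s^0\in\mathbb R^m_{++}$, then $f(s)\le f(Ds)$ for all $s\in\mathbb R^m_{++}$. *)

theory Defs
  imports "HOL-Analysis.Analysis"
begin

definition pos_vecs :: "(real^'m) set" where
  "pos_vecs = {s. \<forall>i. 0 < s $ i}"

definition polytope_P :: "real^'n^'m \<Rightarrow> real^'m \<Rightarrow> (real^'n) set" where
  "polytope_P A b = {x. \<forall>i. (A *v x) $ i \<le> b $ i}"

definition weighted_center ::
  "real^'n^'m \<Rightarrow> real^'m \<Rightarrow> real^'m \<Rightarrow> real^'n \<Rightarrow> real^'m \<Rightarrow> real^'m \<Rightarrow> bool" where
  "weighted_center A b w x y s \<longleftrightarrow>
     A *v x + s = b \<and> (\<forall>i. 0 < s $ i) \<and> transpose A *v y = 0 \<and> (\<forall>i. s $ i * y $ i = w $ i)"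

definition Wsimplex :: "(real^'m) set" where
  "Wsimplex = {w. (\<forall>i. 0 < w $ i) \<and> (\<Sum>i\<in>UNIV. w $ i) = 1}"

definition s_vector :: "real^'n^'m \<Rightarrow> real^'m \<Rightarrow> real^'m \<Rightarrow> real^'m" where
  "s_vector A b w = (THE s. \<exists>x y. weighted_center A b w x y s)"

definition centric_s :: "real^'n^'m \<Rightarrow> real^'m \<Rightarrow> (real^'m) set" where
  "centric_s A b = s_vector A b ` Wsimplex"

definition W_of_s :: "real^'n^'m \<Rightarrow> real^'m \<Rightarrow> real^'m \<Rightarrow> (real^'m) set" where
  "W_of_s A b s = {w \<in> Wsimplex. s_vector A b w = s}"

definition supergradient :: "(real^'m \<Rightarrow> real) \<Rightarrow> real^'m \<Rightarrow> real^'m \<Rightarrow> bool" where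
  "supergradient U s0 g \<longleftrightarrow> (\<forall>s\<in>pos_vecs. U s \<le> U s0 + g \<bullet> (s - s0))"

definition diag_mult :: "real^'m \<Rightarrow> real^'m \<Rightarrow> real^'m" where
  "diag_mult d s = (\<chi> i. d $ i * s $ i)"

definition NDAS :: "(real^'m \<Rightarrow> real) \<Rightarrow> bool" where
  "NDAS f \<longleftrightarrow> (\<forall>d\<in>pos_vecs.
     (\<forall>s\<in>pos_vecs. f s \<le> max (f (diag_mult d s)) (f (diag_mult (\<chi> i. inverse (d $ i)) s))) \<and>
     (\<forall>s0\<in>pos_vecs. f s0 \<le> f (diag_mult d s0) \<longrightarrow> (\<forall>s\<in>pos_vecs. f s \<le> f (diag_mult d s))))"

end

theory Submission imports Defs begin

lemma wc_unique:
  assumes "weighted_center A b w x y s" "weighted_center A b w x' y' s'" "\<forall>i. 0 < w $ i"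
  shows "s = s'"
proof -
  have s: "\<forall>i. 0 < s $ i" "\<forall>i. 0 < s' $ i" "A *v x + s = b" "A *v x' + s' = b"
     "transpose A *v y = 0" "transpose A *v y' = 0" "\<forall>i. s $ i * y $ i = w $ i" "\<forall>i. s' $ i * y' $ i = w $ i"
    using assms(1,2) unfolding weighted_center_def by blast+
  have "s = b - A *v x" "s' = b - A *v x'" using s(3,4) by (auto simp: algebra_simps)
  hence "s - s' = A *v (x' - x)" by (simp add: matrix_vector_mult_diff_distrib)
  have "(x' - x) \<bullet> (transpose A *v (y - y')) = (y - y') \<bullet> (A *v (x' - x))"
    by (simp only: transpose_matrix_vector inner_commute[of "x'-x"] dot_lmul_matrix)
  hence "(s - s') \<bullet> (y - y') = (x' - x) \<bullet> (transpose A *v (y - y'))"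
    using \<open>s - s' = A *v (x' - x)\<close> by (metis inner_commute)
  also have "\<dots> = 0" using s(5,6) by (simp add: matrix_vector_mult_diff_distrib)
  finally have sum0: "(\<Sum>i\<in>UNIV. (s$i - s'$i) * (y$i - y'$i)) = 0" by (simp add: inner_vec_def)
  have trm: "(s$i - s'$i) * (y$i - y'$i) = - w$i * (s$i - s'$i)^2 / (s$i * s'$i)" for i
  proof -
    have e: "s$i * y$i = w$i" "s'$i*y'$i = w$i" "0<s$i" "0<s'$i" using s by auto
    hence "y$i = w$i / s$i" "y'$i = w$i / s'$i" by (auto simp: field_simps)
    thus ?thesis using e(3,4)
      by (simp add: field_simps power2_eq_square)
  qed
  have nonneg0: "0 \<le> w$i * (s$i - s'$i)^2 / (s$i * s'$i)" for i
    using s(1,2)[rule_format, of i] assms(3)[rule_format, of i] by (simp add: less_imp_le)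
  hence nonneg: "\<forall>i\<in>UNIV. 0 \<le> w$i * (s$i - s'$i)^2 / (s$i * s'$i)" by blast
  have "(\<Sum>i\<in>UNIV. w$i * (s$i - s'$i)^2 / (s$i * s'$i)) = 0"
    using sum0 unfolding trm by (simp add: sum_negf)
  hence z: "\<forall>i\<in>UNIV. w$i * (s$i - s'$i)^2 / (s$i * s'$i) = 0"
    using nonneg by (subst (asm) sum_nonneg_eq_0_iff) auto
  have "s$i = s'$i" for i
    using z[rule_format, of i] s(1,2)[rule_format, of i] assms(3)[rule_format, of i] by simp
  hence "\<forall>i. s$i = s'$i" by blast
  thus ?thesis by (simp add: vec_eq_iff)
qed

lemma wc_exists:
  fixes A :: "real^'n^'m"
  assumes bnd: "bounded (polytope_P A b)" and x0: "A *v x0 + s0 = b" and s0pos: "\<forall>l. 0 < s0$l"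
    and wpos: "\<forall>l. 0 < w$l"
  shows "\<exists>x y s. weighted_center A b w x y s"
proof -
  let ?P = "polytope_P A b"
  obtain B where B: "\<forall>x\<in>?P. norm x \<le> B" using bnd unfolding bounded_iff by blast
  obtain K where K: "\<forall>x. norm (A *v x) \<le> norm x * K" "K > 0"
    using bounded_linear.pos_bounded[OF matrix_vector_mul_bounded_linear[of A]] by blast
  define M1 where "M1 = max 1 (norm b + B * K)"
  have M1: "1 \<le> M1" unfolding M1_def by simp
  have sM: "b$l - (A *v x)$l \<le> M1" if "x \<in> ?P" for x l
  proof -
    have "\<bar>b$l\<bar> \<le> norm b" "\<bar>(A *v x)$l\<bar> \<le> norm (A *v x)" by (rule component_le_norm_cart)+
    moreover have "norm (A *v x) \<le> B * K" using K B that
      by (metis mult_right_mono order_less_imp_le order_trans)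
    ultimately show ?thesis unfolding M1_def by linarith
  qed
  define f where "f x = -(\<Sum>l\<in>UNIV. w$l * ln (b$l - (A *v x)$l))" for x
  define c where "c l = ln M1 - ((\<Sum>l\<in>UNIV. w$l) * ln M1 + f x0) / w$l" for l
  define \<delta> where "\<delta> = Min (range (\<lambda>l. exp (c l)))"
  have \<delta>pos: "0 < \<delta>" unfolding \<delta>_def by (subst Min_gr_iff) auto
  have key: "\<delta> \<le> b$l - (A *v x)$l"
    if xP: "x \<in> ?P" and xpos: "\<forall>l. 0 < b$l - (A *v x)$l" and fx: "f x \<le> f x0" for x l
  proof -
    define h where "h l' = w$l' * (ln M1 - ln (b$l' - (A *v x)$l'))" for l'
    have hnn: "0 \<le> h l'" for l'
    proof -
      have "ln (b$l' - (A *v x)$l') \<le> ln M1" using sM[OF xP, of l'] xpos M1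
        by (subst ln_le_cancel_iff) auto
      thus ?thesis unfolding h_def using wpos by (simp add: less_imp_le)
    qed
    have "h l \<le> sum h UNIV" by (rule member_le_sum) (auto simp: hnn)
    also have "sum h UNIV = (\<Sum>l\<in>UNIV. w$l) * ln M1 + f x"
      unfolding h_def f_def by (simp add: right_diff_distrib sum_subtractf sum_distrib_right)
    finally have "w$l * (ln M1 - ln (b$l - (A *v x)$l)) \<le> (\<Sum>l\<in>UNIV. w$l) * ln M1 + f x0"
      using fx unfolding h_def by linarith
    hence "c l \<le> ln (b$l - (A *v x)$l)" unfolding c_def using wpos[rule_format, of l]
      by (simp add: field_simps)
    hence "exp (c l) \<le> b$l - (A *v x)$l" using xpos
      by (metis exp_le_cancel_iff exp_ln)
    moreover have "\<delta> \<le> exp (c l)" unfolding \<delta>_def by (rule Min_le) auto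
    ultimately show ?thesis by linarith
  qed
  have sx0: "b$l - (A *v x0)$l = s0$l" for l
    using arg_cong[OF x0, of "\<lambda>v. v$l"] by simp
  have "(A *v x0)$i \<le> b$i" for i using sx0[of i] s0pos[rule_format, of i] by linarith
  hence x0P: "x0 \<in> ?P" unfolding polytope_P_def by blast
  define Kset where "Kset = {x. \<forall>l. \<delta> \<le> b$l - (A *v x)$l}"
  have Kpos: "0 < b$l - (A *v x)$l" if "x \<in> Kset" for x l
  proof -
    have "\<delta> \<le> b$l - (A *v x)$l" using that unfolding Kset_def by blast
    thus ?thesis using \<delta>pos by linarith
  qed
  have Kne: "b$l - (A *v x)$l \<noteq> 0" if "x \<in> Kset" for x l using Kpos[OF that, of l] by linarith
  have KP: "Kset \<subseteq> ?P"
  proof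
    fix x assume "x \<in> Kset"
    hence "(A *v x)$i \<le> b$i" for i using Kpos[of x i] by linarith
    thus "x \<in> ?P" unfolding polytope_P_def by blast
  qed
  have cK: "closed Kset" unfolding Kset_def
    by (intro closed_Collect_all closed_Collect_le continuous_intros)
  have kK: "compact Kset" using bounded_subset[OF bnd KP] cK by (simp add: compact_eq_bounded_closed)
  have x0K: "x0 \<in> Kset" unfolding Kset_def using key[OF x0P] sx0 s0pos by simp
  have contf: "continuous_on Kset f" unfolding f_def
    by (intro continuous_intros) (use Kne in blast)
  obtain xm where xm: "xm \<in> Kset" "\<forall>z\<in>Kset. f xm \<le> f z"
    using continuous_attains_inf[OF kK _ contf] x0K by blast
  define S where "S = (\<Inter>l\<in>UNIV. {x. (A *v x)$l < b$l})"
  have oS: "open S" unfolding S_def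
    by (intro open_INT finite ballI open_Collect_less continuous_intros)
  have xmS: "xm \<in> S" unfolding S_def using Kpos[OF xm(1)] by simp
  have minS: "\<forall>z\<in>S. f xm \<le> f z"
  proof
    fix z assume z: "z \<in> S"
    show "f xm \<le> f z"
    proof (cases "f z \<le> f x0")
      case True
      have zl: "(A *v z)$l < b$l" for l using z unfolding S_def by blast
      hence zpos: "\<forall>l. 0 < b$l - (A *v z)$l" by simp
      have zP: "z \<in> ?P" using zl unfolding polytope_P_def by (simp add: less_imp_le)
      have "z \<in> Kset" unfolding Kset_def using key[OF zP zpos True] by blast
      thus ?thesis using xm by blast
    next
      case False
      have "f xm \<le> f x0" using xm(2) x0K by blast
      thus ?thesis using False by linarith
    qed
  qed
  define sm where "sm = b - A *v xm"
  have smpos: "0 < sm$l" for l unfolding sm_def using Kpos[OF xm(1)] by simp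
  have dA: "((\<lambda>x. (A *v x)$l) has_derivative (\<lambda>v. (A *v v)$l)) (at x)" for l x
    by (rule bounded_linear_imp_has_derivative)
       (rule bounded_linear_compose[OF bounded_linear_vec_nth matrix_vector_mul_bounded_linear])
  have fd: "(f has_derivative (\<lambda>v. -(\<Sum>l\<in>UNIV. w$l * ((0 - (A *v v)$l) * inverse (b$l - (A *v xm)$l))))) (at xm)"
    unfolding f_def
    by (intro has_derivative_minus has_derivative_sum has_derivative_mult_right has_derivative_ln
         has_derivative_diff has_derivative_const dA) (use Kpos[OF xm(1)] in auto)
  have f0: "(\<lambda>v. -(\<Sum>l\<in>UNIV. w$l * ((0 - (A *v v)$l) * inverse (b$l - (A *v xm)$l)))) = (\<lambda>v. 0)"
    by (rule differential_zero_maxmin[OF xmS oS fd]) (use minS in blast)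
  define y where "y = (\<chi> l. w$l / sm$l)"
  have yA: "y \<bullet> (A *v v) = 0" for v
  proof -
    have "(\<Sum>l\<in>UNIV. w$l * ((0 - (A *v v)$l) * inverse (b$l - (A *v xm)$l))) = 0"
      using fun_cong[OF f0, of v] by simp
    hence "(\<Sum>l\<in>UNIV. y$l * (A *v v)$l) = 0"
      unfolding y_def sm_def by (simp add: field_simps sum_negf)
    thus ?thesis by (simp add: inner_vec_def)
  qed
  have "(y v* A) \<bullet> (y v* A) = 0" using yA[of "y v* A"] by (simp add: dot_lmul_matrix)
  hence yT: "transpose A *v y = 0" by simp
  have "weighted_center A b w xm y sm"
    unfolding weighted_center_def using yT smpos
    by (auto simp: sm_def y_def) (metis order_less_irrefl)
  thus ?thesis by blast
qed

lemma sdot: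
  fixes A :: "real^'n^'m"
  assumes "A *v x + s = b" "transpose A *v y = 0"
  shows "s \<bullet> y = b \<bullet> y"
proof -
  have "(transpose A *v y) \<bullet> x = y \<bullet> (A *v x)"
    by (simp add: dot_lmul_matrix)
  hence "(A *v x) \<bullet> y = (transpose A *v y) \<bullet> x" by (metis inner_commute)
  hence "(A *v x) \<bullet> y = 0" using assms(2) by simp
  moreover have "s = b - A *v x" using assms(1) by (auto simp: algebra_simps)
  ultimately show ?thesis by (simp add: inner_diff_left)
qed

lemma svec_eq:
  assumes "weighted_center A b w x y s" "\<forall>i. 0 < w $ i"
  shows "s_vector A b w = s"
  unfolding s_vector_def
proof (rule the_equality)
  show "\<exists>x y. weighted_center A b w x y s" using assms(1) by blast
next
  fix s' assume "\<exists>x y. weighted_center A b w x y s'"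
  then obtain x' y' where "weighted_center A b w x' y' s'" by blast
  thus "s' = s" using wc_unique[OF _ assms(1) assms(2)] by blast
qed

theorem proposition3p2:
  fixes A :: "real^'n^'m" and b :: "real^'m" and U :: "real^'m \<Rightarrow> real"
    and s_opt :: "real^'m" and k :: nat
    and w :: "nat \<Rightarrow> real^'m" and x :: "nat \<Rightarrow> real^'n"
    and y s g :: "nat \<Rightarrow> real^'m"
  assumes rankA: "rank A = CARD('n)"
    and bnd: "bounded (polytope_P A b)"
    and intP: "interior (polytope_P A b) \<noteq> {}"
    and conc: "concave_on pos_vecs U"
    and ndas: "NDAS U"
    and sopt: "s_opt \<in> centric_s A b" "\<forall>s'\<in>centric_s A b. U s' \<le> U s_opt"
    and wW: "\<forall>i\<le>k. w i \<in> Wsimplex"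
    and wc: "\<forall>i\<le>k. weighted_center A b (w i) (x i) (y i) (s i)"
    and sg: "\<forall>i\<le>k. supergradient U (s i) (g i)"
    and relint: "\<forall>i. 1 \<le> i \<and> i \<le> k \<longrightarrow>
        w i \<in> rel_interior (\<Inter>j<i. {v. (\<chi> l. g j $ l / y j $ l) \<bullet> (v - w j) \<ge> 0} \<inter> Wsimplex)"
  shows "(\<Inter>j\<le>k. {v. (\<chi> l. g j $ l / y j $ l) \<bullet> (v - w j) \<ge> 0} \<inter> Wsimplex)
           \<inter> W_of_s A b s_opt \<noteq> {}"
proof -
  have wpos: "0 < w i $ l" if "i \<le> k" for i l using wW that unfolding Wsimplex_def by blast
  have wsum: "(\<Sum>l\<in>UNIV. w i $ l) = 1" if "i \<le> k" for i using wW that unfolding Wsimplex_def by blast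
  have wci: "A *v x i + s i = b" "\<forall>l. 0 < s i $ l" "transpose A *v y i = 0" "\<forall>l. s i $ l * y i $ l = w i $ l"
    if "i \<le> k" for i using wc that unfolding weighted_center_def by blast+
  have ypos: "0 < y i $ l" if "i \<le> k" for i l
    using wci(2,4)[OF that] wpos[OF that, of l] by (metis zero_less_mult_pos)
  obtain w0 where w0: "w0 \<in> Wsimplex" "s_opt = s_vector A b w0"
    using sopt(1) unfolding centric_s_def by blast
  have w0pos: "\<forall>l. 0 < w0 $ l" using w0(1) unfolding Wsimplex_def by blast
  obtain xo yo so where wco: "weighted_center A b w0 xo yo so"
    using wc_exists[OF bnd wci(1)[of 0] wci(2)[of 0] w0pos] by auto
  have so: "so = s_opt" using svec_eq[OF wco w0pos] w0(2) by simp
  have wco': "A *v xo + s_opt = b" "\<forall>l. 0 < s_opt $ l"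
    using wco unfolding weighted_center_def so by blast+
  have Usi: "U (s i) \<le> U s_opt" if "i \<le> k" for i
  proof -
    have "s_vector A b (w i) = s i" using svec_eq[of A b "w i" "x i" "y i" "s i"] wc wpos that by blast
    hence "s i \<in> centric_s A b" unfolding centric_s_def using wW that by force
    thus ?thesis using sopt(2) by blast
  qed
  obtain jm where jm: "jm \<le> k" "\<forall>j\<le>k. U (w j) \<le> U (w jm)"
  proof -
    have fin: "finite ((\<lambda>j. U (w j)) ` {..k})" "(\<lambda>j. U (w j)) ` {..k} \<noteq> {}" by auto
    have "Max ((\<lambda>j. U (w j)) ` {..k}) \<in> (\<lambda>j. U (w j)) ` {..k}" by (rule Max_in[OF fin])
    then obtain jm where "jm \<in> {..k}" "Max ((\<lambda>j. U (w j)) ` {..k}) = U (w jm)" by (rule imageE)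
    hence "jm \<le> k" "U (w jm) = Max ((\<lambda>j. U (w j)) ` {..k})" by auto
    moreover have "\<forall>j\<le>k. U (w j) \<le> Max ((\<lambda>j. U (w j)) ` {..k})" using fin(1) by simp
    ultimately show ?thesis using that by auto
  qed
  define wn where "wn = (\<chi> l. s_opt $ l * y jm $ l)"
  have wnpos: "0 < wn $ l" for l unfolding wn_def using wco'(2) ypos[OF jm(1)] by simp
  have "(\<Sum>l\<in>UNIV. wn $ l) = s_opt \<bullet> y jm" unfolding wn_def by (simp add: inner_vec_def)
  also have "\<dots> = b \<bullet> y jm" using sdot[OF wco'(1) wci(3)[OF jm(1)]] .
  also have "\<dots> = s jm \<bullet> y jm" using sdot[OF wci(1)[OF jm(1)] wci(3)[OF jm(1)]] by simp
  also have "\<dots> = 1" using wsum[OF jm(1)] wci(4)[OF jm(1)] by (simp add: inner_vec_def)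
  finally have wnsum: "(\<Sum>l\<in>UNIV. wn $ l) = 1" .
  have wnW: "wn \<in> Wsimplex" unfolding Wsimplex_def using wnpos wnsum by blast
  have wcn: "weighted_center A b wn xo (y jm) s_opt"
    unfolding weighted_center_def using wco'(1,2) wci(3)[OF jm(1)] by (simp add: wn_def)
  have wnWs: "wn \<in> W_of_s A b s_opt"
    unfolding W_of_s_def using wnW svec_eq[OF wcn] wnpos by blast
  have half: "(\<chi> l. g j $ l / y j $ l) \<bullet> (wn - w j) \<ge> 0" if jk: "j \<le> k" for j
  proof -
    define z where "z = (\<chi> l. wn $ l / y j $ l)"
    have zpos: "z \<in> pos_vecs" unfolding pos_vecs_def z_def using wnpos ypos[OF jk] by simp
    have sjpos: "s j \<in> pos_vecs" unfolding pos_vecs_def using wci(2)[OF jk] by simp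
    have wjpos: "w j \<in> pos_vecs" unfolding pos_vecs_def using wpos[OF jk] by simp
    have sjmpos: "s jm \<in> pos_vecs" unfolding pos_vecs_def using wci(2)[OF jm(1)] by simp
    define d1 where "d1 = (\<chi> l. s_opt $ l / s jm $ l)"
    define d2 where "d2 = (\<chi> l. w jm $ l / w j $ l)"
    have d1pos: "d1 \<in> pos_vecs" unfolding pos_vecs_def d1_def using wco'(2) wci(2)[OF jm(1)] by simp
    have d2pos: "d2 \<in> pos_vecs" unfolding pos_vecs_def d2_def using wpos[OF jm(1)] wpos[OF jk] by simp
    have e1: "diag_mult d1 (s jm) = s_opt" unfolding diag_mult_def d1_def
      using wci(2)[OF jm(1)] by (simp add: vec_eq_iff) (metis order_less_irrefl)
    have e2: "diag_mult d2 (w j) = w jm" unfolding diag_mult_def d2_def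
      using wpos[OF jk] by (simp add: vec_eq_iff) (metis order_less_irrefl)
    have G1: "\<forall>s\<in>pos_vecs. U s \<le> U (diag_mult d1 s)"
      using ndas d1pos sjmpos Usi[OF jm(1)] e1 unfolding NDAS_def by metis
    have G2: "\<forall>s\<in>pos_vecs. U s \<le> U (diag_mult d2 s)"
      using ndas d2pos wjpos jm(2) jk e2 unfolding NDAS_def by metis
    have dpos: "diag_mult d2 (s j) \<in> pos_vecs" using d2pos sjpos
      unfolding pos_vecs_def diag_mult_def by simp
    have ez: "diag_mult d1 (diag_mult d2 (s j)) = z"
    proof -
      have "d1 $ l * (d2 $ l * s j $ l) = z $ l" for l
      proof -
        have p: "0 < s jm $ l" "0 < s j $ l" "0 < y jm $ l" "0 < y j $ l"
          using wci(2)[OF jm(1)] wci(2)[OF jk] ypos[OF jm(1)] ypos[OF jk] by auto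
        have "w jm $ l = s jm $ l * y jm $ l" "w j $ l = s j $ l * y j $ l"
          using wci(4)[OF jm(1)] wci(4)[OF jk] by auto
        thus ?thesis unfolding d1_def d2_def z_def wn_def using p by (simp add: field_simps)
      qed
      thus ?thesis unfolding diag_mult_def by (simp add: vec_eq_iff)
    qed
    have "U (s j) \<le> U z" using G2 sjpos G1 dpos ez by (metis order_trans)
    moreover have "U z \<le> U (s j) + g j \<bullet> (z - s j)" using sg jk zpos unfolding supergradient_def by blast
    moreover have "(\<chi> l. g j $ l / y j $ l) \<bullet> (wn - w j) = g j \<bullet> (z - s j)"
    proof -
      have "g j $ l / y j $ l * (wn $ l - w j $ l) = g j $ l * (z $ l - s j $ l)" for l
      proof -
        have "w j $ l = s j $ l * y j $ l" using wci(4)[OF jk] by auto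
        thus ?thesis unfolding z_def using ypos[OF jk, of l] by (simp add: field_simps)
      qed
      thus ?thesis by (simp add: inner_vec_def)
    qed
    ultimately show ?thesis by linarith
  qed
  have "wn \<in> (\<Inter>j\<le>k. {v. (\<chi> l. g j $ l / y j $ l) \<bullet> (v - w j) \<ge> 0} \<inter> Wsimplex)"
    using half wnW by blast
  thus ?thesis using wnWs by blast
qed

end
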